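(* Let $i\ge 3$ and $k\ge 3$ be integers. Then: (a) $n_3(F_i,F_{i+2},F_{i+k})=\tfrac12\bigl(7F_iF_{i+2}-F_i-F_{i+2}+1\bigr)$ whenever $k\ge i+3$; (b) $n_3(F_i,F_{i+2},F_{2i})=\tfrac12\bigl((5F_i-1)F_{i+2}-F_i+1\bigr)-2F_iF_{i-2}$; (c) $n_3(F_i,F_{i+2},F_{2i-1})=\tfrac12\bigl((F_i+4F_{i-1}-1)F_{i+2}-F_i+1\bigr)-2F_{i-1}F_{i-3}$ for $i\ge 4$; (d) $n_3(F_i,F_{i+2},F_{2i-2})=\tfrac12\bigl((3F_i-1)F_{i+2}-F_i+1\bigr)-(8F_i-15F_{i-2})F_{i-4}$ for $i\ge 5$; (e) if $r=\lfloor (F_i-1)/F_k\rfloor\ge 3$ (equivalently $k\le i-3$), then $$n_3(F_i,F_{i+2},F_{i+k})=\tfrac12\bigl((F_i+6F_k-1)F_{i+2}-F_i+1\bigr)-\tfrac12\bigl(2rF_i-(r+4)(r-3)F_k\bigr)F_{k-2}.$$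
   Context: Fibonacci numbers: $F_0=0$, $F_1=1$, $F_n=F_{n-1}+F_{n-2}$. For positive integers $a_1,\dots,a_l$ with $\gcd(a_1,\dots,a_l)=1$ and an integer $n$, let $d(n;a_1,\dots,a_l)$ be the number of tuples $(x_1,\dots,x_l)$ of nonnegative integers with $a_1x_1+\dots+a_lx_l=n$. For a nonnegative integer $p$, the $p$-Sylvester number $n_p(a_1,\dots,a_l)$ is the number of nonnegative integers $n$ with $d(n;a_1,\dots,a_l)\le p$. *)

theory Defs
  imports Complex_Main "HOL-Number_Theory.Fib"
begin

definition num_reps :: "nat \<Rightarrow> nat list \<Rightarrow> nat" where
  "num_reps n as = card {xs :: nat list. length xs = length as \<and>
      (\<Sum>j<length as. as ! j * xs ! j) = n}"

definition sylvester_p :: "nat \<Rightarrow> nat list \<Rightarrow> nat" where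
  "sylvester_p p as = card {n :: nat. num_reps n as \<le> p}"

end

theory Submission
  imports Defs "HOL-Number_Theory.Number_Theory"
begin

lemma num_reps3: "num_reps n [a,b,c] = card {xs. length xs = 3 \<and> a*xs!0 + b*xs!1 + c*xs!2 = n}"
  unfolding num_reps_def by (simp add: numeral_3_eq_3 numeral_2_eq_2 lessThan_Suc algebra_simps)

lemma card_classes:
  fixes P :: "nat \<Rightarrow> bool" and \<sigma> M :: "nat \<Rightarrow> nat"
  assumes a: "a > 0" and bij: "bij_betw \<sigma> {..<a} {..<a}"
    and H: "\<And>r x. r < a \<Longrightarrow> P (\<sigma> r + a*x) \<longleftrightarrow> x < M r"
  shows "card {n. P n} = (\<Sum>r<a. M r)"
proof -
  let ?g = "\<lambda>(r,x). \<sigma> r + a*x"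
  let ?S = "SIGMA r:{..<a}. {..<M r}"
  have inj: "inj_on ?g ?S"
  proof (rule inj_onI, clarsimp)
    fix r x r' x'
    assume r: "r < a" "r' < a" and e: "\<sigma> r + a*x = \<sigma> r' + a*x'"
    have s: "\<sigma> r < a" "\<sigma> r' < a" using bij r by (auto simp: bij_betw_def)
    have "(\<sigma> r + a*x) mod a = (\<sigma> r' + a*x') mod a" using e by simp
    hence "\<sigma> r = \<sigma> r'" using s by simp
    hence rr: "r = r'" using bij r by (auto simp: bij_betw_def inj_on_def)
    with e a show "r = r' \<and> x = x'" by simp
  qed
  have img1: "?g ` ?S \<subseteq> {n. P n}" using H by auto
  have img2: "{n. P n} \<subseteq> ?g ` ?S"
  proof
    fix n assume "n \<in> {n. P n}"
    hence Pn: "P n" by simp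
    have "n mod a \<in> \<sigma> ` {..<a}" using bij a by (simp add: bij_betw_def)
    then obtain r where r: "r < a" "\<sigma> r = n mod a" by auto
    have n: "n = \<sigma> r + a * (n div a)" using r by simp
    have "n div a < M r" using H[OF r(1), of "n div a"] Pn n by simp
    thus "n \<in> ?g ` ?S" using r n by (auto intro!: image_eqI[of _ _ "(r, n div a)"])
  qed
  have img: "?g ` ?S = {n. P n}" using img1 img2 by (rule equalityI)
  have "card {n. P n} = card ?S" using card_image[OF inj] img by simp
  also have "\<dots> = (\<Sum>r<a. M r)" by simp
  finally show ?thesis .
qed

lemma bij_mult_mod:
  fixes a b :: nat
  assumes "a > 0" "coprime a b"
  shows "bij_betw (\<lambda>r. r*b mod a) {..<a} {..<a}"
proof -
  have inj: "inj_on (\<lambda>r. r*b mod a) {..<a}"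
  proof (rule inj_onI)
    fix r r' assume r: "r \<in> {..<a}" "r' \<in> {..<a}" and e: "r*b mod a = r'*b mod a"
    have "[r*b = r'*b] (mod a)" using e by (simp add: cong_def)
    hence "[r = r'] (mod a)" using assms(2) by (metis cong_mult_rcancel_nat coprime_commute)
    thus "r = r'" using r by (simp add: cong_def)
  qed
  have "(\<lambda>r. r*b mod a) ` {..<a} = {..<a}"
    by (rule endo_inj_surj) (use inj assms in auto)
  thus ?thesis using inj by (simp add: bij_betw_def)
qed

lemma pair_floor:
  fixes a b r :: nat
  assumes "coprime a b" "0 < r" "r < a" and b0: "b > 0"
  shows "int (r*b div a) + int ((a-r)*b div a) = int b - 1"
proof -
  have nd: "\<not> a dvd r*b"
  proof
    assume "a dvd r*b"
    hence "a dvd r" using assms(1) by (simp add: coprime_dvd_mult_left_iff)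
    thus False using assms(2,3) by (auto dest: dvd_imp_le)
  qed
  define q1 where "q1 = r*b div a"
  define m1 where "m1 = r*b mod a"
  have rb: "r*b = a*q1 + m1" unfolding q1_def m1_def by simp
  have m1: "0 < m1" "m1 < a" using nd assms unfolding m1_def by (auto simp: dvd_eq_mod_eq_0)
  have "(a-r)*b = a*b - r*b" by (simp add: diff_mult_distrib)
  have q1b: "q1 < b" unfolding q1_def
    by (rule less_mult_imp_div_less) (use assms(3) b0 in simp)
  have h0: "int (r*b) = int a * int q1 + int m1" using rb by simp
  have h1: "int ((a-r)*b) = int a * int b - int (r*b)" using assms(3) by (simp add: of_nat_diff left_diff_distrib)
  have h2: "int ((a-r)*b) = (int a - int m1) + int a * (int b - int q1 - 1)"
    using h0 h1 by (simp add: algebra_simps)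
  have "int ((a-r)*b) div int a = (int b - int q1 - 1) + (int a - int m1) div int a"
    unfolding h2 using assms(3) by (subst div_mult_self2) auto
  also have "(int a - int m1) div int a = 0" using m1 by (simp add: div_pos_pos_trivial)
  finally have "int ((a-r)*b) div int a = int b - int q1 - 1" by simp
  hence "int ((a-r)*b div a) = int b - int q1 - 1" by (simp add: zdiv_int)
  thus ?thesis unfolding q1_def by simp
qed

lemma sylv_sum:
  fixes a b :: nat
  assumes "coprime a b" "0 < a" "0 < b"
  shows "2 * (\<Sum>r<a. int (r*b div a)) = (int a - 1) * (int b - 1)"
proof -
  let ?f = "\<lambda>r. int (r*b div a)"
  have e0: "{..<a} = insert 0 {1..<a}" using assms by auto
  have S: "(\<Sum>r<a. ?f r) = (\<Sum>r\<in>{1..<a}. ?f r)" by (simp add: e0)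
  have R: "(\<Sum>r\<in>{1..<a}. ?f r) = (\<Sum>r\<in>{1..<a}. ?f (a - r))"
    by (subst sum.atLeastLessThan_rev) simp
  have "2 * (\<Sum>r<a. ?f r) = (\<Sum>r\<in>{1..<a}. ?f r + ?f (a-r))"
    using S R by (simp add: sum.distrib)
  also have "\<dots> = (\<Sum>r\<in>{1..<a}. int b - 1)"
    by (rule sum.cong) (use pair_floor assms in auto)
  also have "\<dots> = (int a - 1) * (int b - 1)" using assms by (simp add: of_nat_diff)
  finally show ?thesis .
qed

locale setup3 =
  fixes a b c f q :: nat
  assumes a0: "a > 0" and b0: "b > 0" and c0: "c > 0" and f0: "f > 0" and q0: "q > 0"
    and cop: "coprime a b" and ceq: "c + q*a = f*b" and sep: "5*a*q \<le> f*b"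
begin

definition Z :: "nat \<Rightarrow> nat \<Rightarrow> nat" where "Z r s = (r + a*s) div f"
definition w :: "nat \<Rightarrow> nat \<Rightarrow> int" where "w s z = int s * int b - int z * int q"

lemma zle: "f*z \<le> r + a*s \<Longrightarrow> z \<le> Z r s"
  unfolding Z_def using f0 by (simp add: less_eq_div_iff_mult_less_eq mult.commute)

lemma Zmem: "f * Z r s \<le> r + a*s"
  unfolding Z_def by (simp add: times_div_less_eq_dividend)

lemma sep1:
  assumes "r < a" "s \<le> 3" "f*z \<le> r + a*s"
  shows "z*q < b"
proof -
  have "f*(z*q) \<le> (r+a*s)*q" using assms(3) by (simp add: mult.assoc[symmetric])
  also have "\<dots> < (a + a*s)*q" using assms(1) q0 by simp
  also have "\<dots> = a*(1+s)*q" by (simp add: algebra_simps)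
  also have "\<dots> \<le> a*4*q" using assms(2) by (intro mult_le_mono) auto
  also have "\<dots> \<le> f*b" using sep by simp
  finally have "f*(z*q) < f*b" .
  thus ?thesis by simp
qed

lemma sep2:
  assumes "r < a" "4 \<le> s" "f*z \<le> r + a*s"
  shows "z*q + 3*b \<le> s*b"
proof -
  have "f*(z*q) \<le> (r+a*s)*q" using assms(3) by (simp add: mult.assoc[symmetric])
  also have "\<dots> \<le> (a + a*s)*q" using assms(1) by simp
  also have "\<dots> = a*(1+s)*q" by (simp add: algebra_simps)
  also have "\<dots> \<le> a*(5*(s-3))*q" using assms(2) by (intro mult_le_mono) auto
  also have "\<dots> = (5*a*q)*(s-3)" by (simp add: algebra_simps)
  also have "\<dots> \<le> (f*b)*(s-3)" using sep by (rule mult_le_mono1)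
  finally have "f*(z*q) \<le> f*(b*(s-3))" by (simp add: algebra_simps)
  hence "z*q \<le> b*(s-3)" using f0 by simp
  hence h: "z*q \<le> b*s - b*3" by (simp add: diff_mult_distrib2)
  have hb: "b*3 \<le> b*s" using assms(2) by (intro mult_le_mono2) auto
  have "z*q + b*3 \<le> b*s" using h hb by linarith
  thus ?thesis by (metis mult.commute)
qed

lemma wcol0: "w 0 z \<le> 0" by (simp add: w_def)
lemma wcol: assumes "r < a" "1 \<le> s" "s \<le> 3" "f*z \<le> r + a*s"
  shows "int (s-1) * int b < w s z" "w s z \<le> int s * int b"
proof -
  have "z*q < b" using sep1 assms by blast
  hence "int z * int q < int b" by (metis of_nat_less_iff of_nat_mult)
  thus "int (s-1) * int b < w s z" using assms(2) by (simp add: w_def of_nat_diff algebra_simps)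
  show "w s z \<le> int s * int b" by (simp add: w_def)
qed
lemma wbig: assumes "r < a" "4 \<le> s" "f*z \<le> r + a*s"
  shows "3 * int b \<le> w s z"
proof -
  have "z*q + 3*b \<le> s*b" using sep2 assms by blast
  hence "int (z*q + 3*b) \<le> int (s*b)" by linarith
  thus ?thesis by (simp add: w_def algebra_simps)
qed


definition W4 :: "nat \<Rightarrow> int" where
"W4 r = (if 3 \<le> Z r 0 then - int (Z r 0 - 3) * int q
  else if 2 \<le> Z r 0 + Z r 1 then int b - int (Z r 0 + Z r 1 - 2) * int q
  else if 1 \<le> Z r 0 + Z r 1 + Z r 2 then 2 * int b - int (Z r 0 + Z r 1 + Z r 2 - 1) * int q
  else 3 * int b - int (Z r 3) * int q)"

lemma Zmono: "s \<le> s' \<Longrightarrow> Z r s \<le> Z r s'"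
  unfolding Z_def by (intro div_le_mono) simp

lemma Zmem': "f * (Z r s - k) \<le> r + a*s"
  using Zmem[of r s] by (meson diff_le_self le_trans mult_le_mono2)

lemma qcancel: "int x * int q < int y * int q \<Longrightarrow> x < y"
  proof -
  assume "int x * int q < int y * int q"
  hence "int (x * q) < int (y * q)" by simp
  hence "x * q < y * q" by linarith
  thus "x < y" by simp
qed

lemma qmono: "x \<le> y \<Longrightarrow> int x * int q \<le> int y * int q"
  by (simp add: mult_right_mono)

lemma Zq: "r < a \<Longrightarrow> s \<le> 3 \<Longrightarrow> int (Z r s) * int q < int b"
  proof -
  assume "r < a" "s \<le> 3"
  hence "Z r s * q < b" using sep1[of r s "Z r s"] Zmem[of r s] by blast
  hence "int (Z r s * q) < int b" by linarith
  thus ?thesis by simp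
qed

definition PL where "PL r X \<longleftrightarrow> (\<exists>S. finite S \<and> card S = 4 \<and> (\<forall>(s,z)\<in>S. f*z \<le> r + a*s \<and> w s z \<le> X))"
definition PU where "PU r X \<longleftrightarrow> (\<exists>S. finite S \<and> card S \<le> 3 \<and> (\<forall>s z. f*z \<le> r + a*s \<longrightarrow> w s z < X \<longrightarrow> (s,z) \<in> S))"

lemma card3: "card {x,y,z::'x} \<le> 3"
  using card_length[of "[x,y,z]"] by simp

lemma card4: "distinct [x1,x2,x3,x4] \<Longrightarrow> card {x1,x2,x3,x4} = 4"
  by simp

lemma case1:
  assumes r: "r < a" and c1: "3 \<le> Z r 0"
  shows "PL r (W4 r)" "PU r (W4 r)"
proof -
  obtain m where mZ: "Z r 0 = m + 3" using c1 by (metis add.commute le_Suc_ex)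
  have W: "W4 r = - int m * int q" using mZ by (simp add: W4_def)
  have m: "f * (m + 3) \<le> r" using Zmem[of r 0] mZ by simp
  have mm: "k \<le> 3 \<Longrightarrow> f * (m + k) \<le> r" for k using m by (meson add_le_mono1 le_trans mult_le_mono2 add_le_cancel_left)
  show "PL r (W4 r)" unfolding PL_def
  proof (intro exI[of _ "{(0,m+3),(0,m+2),(0,m+1),(0,m)}"] conjI)
    show "card {(0,m+3),(0,m+2),(0,m+1),(0::nat,m)} = 4" by (rule card4) simp
    show "\<forall>(s,z)\<in>{(0,m+3),(0,m+2),(0,m+1),(0::nat,m)}. f*z \<le> r + a*s \<and> w s z \<le> W4 r"
      unfolding W w_def using mm[of 0] mm[of 1] mm[of 2] mm[of 3]
      by (auto simp: algebra_simps)
  qed simp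
  show "PU r (W4 r)" unfolding PU_def
  proof (intro exI[of _ "{(0,m+3),(0,m+2),(0,m+1)}"] conjI allI impI)
    show "card {(0,m+3),(0,m+2),(0::nat,m+1)} \<le> 3" by (rule card3)
    fix s z assume p: "f*z \<le> r + a*s" and lt: "w s z < W4 r"
    have W0: "W4 r \<le> 0" unfolding W by simp
    consider "s = 0" | "1 \<le> s \<and> s \<le> 3" | "4 \<le> s" by linarith
    thus "(s,z) \<in> {(0,m+3),(0,m+2),(0,m+1)}"
    proof cases
      case 1
      have zZ: "z \<le> m+3" using zle[OF p] 1 mZ by simp
      have "int m * int q < int z * int q" using lt unfolding W w_def 1 by simp
      hence "m < z" by (rule qcancel)
      thus ?thesis using zZ 1 by auto
    next
      case 2
      hence "int (s-1) * int b < w s z" using wcol[OF r _ _ p] by auto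
      moreover have "0 \<le> int (s-1) * int b" by simp
      ultimately show ?thesis using lt W0 by linarith
    next
      case 3
      hence "3 * int b \<le> w s z" using wbig[OF r _ p] by auto
      thus ?thesis using lt W0 by simp
    qed
  qed simp
qed

lemma mem: "k \<le> Z r s \<Longrightarrow> f*k \<le> r + a*s"
  using Zmem[of r s] by (meson le_trans mult_le_mono2)

lemma col: assumes r: "r < a" and p: "f*z \<le> r + a*s"
  shows "s = 0 \<and> z \<le> Z r 0 \<or> s = 1 \<and> z \<le> Z r 1 \<and> 0 < w s z \<or> s = 2 \<and> z \<le> Z r 2 \<and> int b < w s z
     \<or> s = 3 \<and> z \<le> Z r 3 \<and> 2*int b < w s z \<or> 3 * int b \<le> w s z"
proof -
  have zz: "z \<le> Z r s" using zle[OF p] .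
  consider "s = 0" | "s = 1" | "s = 2" | "s = 3" | "4 \<le> s" by linarith
  thus ?thesis
  proof cases
    case 5 thus ?thesis using wbig[OF r _ p] by auto
  next
    case 2 thus ?thesis using wcol[OF r _ _ p] zz by auto
  next
    case 3 thus ?thesis using wcol[OF r _ _ p] zz by auto
  next
    case 4 thus ?thesis using wcol[OF r _ _ p] zz by auto
  qed (use zz in auto)
qed

lemma case2:
  assumes r: "r < a" and c1: "\<not> 3 \<le> Z r 0" and c2: "2 \<le> Z r 0 + Z r 1"
  shows "PL r (W4 r)" "PU r (W4 r)"
proof -
  have Wd: "W4 r = int b - int (Z r 0 + Z r 1 - 2) * int q" using c1 c2 by (simp add: W4_def)
  have Zq1: "int (Z r 1) * int q < int b" using Zq[OF r] by simp
  have z01: "Z r 0 \<le> Z r 1" by (rule Zmono) simp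
  consider "Z r 0 = 0" | "Z r 0 = 1" | "Z r 0 = 2" using c1 by linarith
  hence "PL r (W4 r) \<and> PU r (W4 r)"
  proof cases
    case 1
    obtain m where mZ: "Z r 1 = m + 2" using c2 1 by (metis add.commute add_0 le_Suc_ex)
    have W: "W4 r = int b - int m * int q" using Wd 1 mZ by simp
    have mq: "int m * int q \<le> int b" using Zq1 mZ qmono[of m "m+2"] by simp
    have PL: "PL r (W4 r)" unfolding PL_def
    proof (intro exI[of _ "{(0,0),(1,m+2),(1,m+1),(1,m)}"] conjI)
      show "card {(0,0),(1,m+2),(1,m+1),(1::nat,m)} = 4" by (rule card4) simp
      show "\<forall>(s,z)\<in>{(0,0),(1,m+2),(1,m+1),(1::nat,m)}. f*z \<le> r + a*s \<and> w s z \<le> W4 r"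
        unfolding W w_def using mem[of "m+2" r 1] mem[of "m+1" r 1] mem[of m r 1] mZ mq
        by (auto simp: algebra_simps)
    qed simp
    have PU: "PU r (W4 r)" unfolding PU_def
    proof (intro exI[of _ "{(0,0),(1,m+2),(1,m+1)}"] conjI allI impI)
      show "card {(0,0),(1,m+2),(1::nat,m+1)} \<le> 3" by (rule card3)
      fix s z assume p: "f*z \<le> r + a*s" and lt: "w s z < W4 r"
      have Wb: "W4 r \<le> int b" unfolding W by simp
      from col[OF r p] show "(s,z) \<in> {(0,0),(1,m+2),(1,m+1)}"
      proof (elim disjE conjE)
        assume "s = 1" "z \<le> Z r 1"
        moreover have "int m * int q < int z * int q" using lt \<open>s = 1\<close> unfolding W w_def by simp
        hence "m < z" by (rule qcancel)
        ultimately show ?thesis using mZ by auto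
      qed (use 1 lt Wb in auto)
    qed simp
    show ?thesis using PL PU by simp
  next
    case 2
    obtain m where mZ: "Z r 1 = m + 1" using c2 2 by (metis add.commute le_Suc_ex Suc_eq_plus1 add_le_cancel_left one_add_one)
    have W: "W4 r = int b - int m * int q" using Wd 2 mZ by simp
    have mq: "int m * int q \<le> int b" using Zq1 mZ qmono[of m "m+1"] by simp
    have PL: "PL r (W4 r)" unfolding PL_def
    proof (intro exI[of _ "{(0,0),(0,1),(1,m+1),(1,m)}"] conjI)
      show "card {(0,0),(0,1),(1,m+1),(1::nat,m)} = 4" by (rule card4) simp
      show "\<forall>(s,z)\<in>{(0,0),(0,1),(1,m+1),(1::nat,m)}. f*z \<le> r + a*s \<and> w s z \<le> W4 r"
        unfolding W w_def using mem[of 1 r 0] mem[of "m+1" r 1] mem[of m r 1] mZ mq 2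
        by (auto simp: algebra_simps)
    qed simp
    have PU: "PU r (W4 r)" unfolding PU_def
    proof (intro exI[of _ "{(0,0),(0,1),(1,m+1)}"] conjI allI impI)
      show "card {(0,0),(0,1),(1::nat,m+1)} \<le> 3" by (rule card3)
      fix s z assume p: "f*z \<le> r + a*s" and lt: "w s z < W4 r"
      have Wb: "W4 r \<le> int b" unfolding W by simp
      from col[OF r p] show "(s,z) \<in> {(0,0),(0,1),(1,m+1)}"
      proof (elim disjE conjE)
        assume "s = 1" "z \<le> Z r 1"
        moreover have "int m * int q < int z * int q" using lt \<open>s = 1\<close> unfolding W w_def by simp
        hence "m < z" by (rule qcancel)
        ultimately show ?thesis using mZ by auto
      next
        assume "s = 0" "z \<le> Z r 0"
        thus ?thesis using 2 by auto
      qed (use lt Wb in auto)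
    qed simp
    show ?thesis using PL PU by simp
  next
    case 3
    define m where "m = Z r 1"
    have W: "W4 r = int b - int m * int q" using Wd 3 m_def by simp
    have mq: "int m * int q \<le> int b" using Zq1 m_def by simp
    have PL: "PL r (W4 r)" unfolding PL_def
    proof (intro exI[of _ "{(0,0),(0,1),(0,2),(1,m)}"] conjI)
      show "card {(0,0),(0,1),(0,2),(1::nat,m)} = 4" by (rule card4) simp
      show "\<forall>(s,z)\<in>{(0,0),(0,1),(0,2),(1::nat,m)}. f*z \<le> r + a*s \<and> w s z \<le> W4 r"
        unfolding W w_def using mem[of 1 r 0] mem[of 2 r 0] mem[of m r 1] m_def mq 3
        by (auto simp: algebra_simps)
    qed simp
    have PU: "PU r (W4 r)" unfolding PU_def
    proof (intro exI[of _ "{(0,0),(0,1),(0,2)}"] conjI allI impI)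
      show "card {(0,0),(0,1),(0::nat,2::nat)} \<le> 3" by (rule card3)
      fix s z assume p: "f*z \<le> r + a*s" and lt: "w s z < W4 r"
      have Wb: "W4 r \<le> int b" unfolding W by simp
      from col[OF r p] show "(s,z) \<in> {(0,0),(0,1),(0,2)}"
      proof (elim disjE conjE)
        assume "s = 1" "z \<le> Z r 1"
        moreover have "int m * int q < int z * int q" using lt \<open>s = 1\<close> unfolding W w_def by simp
        hence "m < z" by (rule qcancel)
        ultimately show ?thesis using m_def by auto
      next
        assume "s = 0" "z \<le> Z r 0"
        thus ?thesis using 3 by auto
      qed (use lt Wb in auto)
    qed simp
    show ?thesis using PL PU by simp
  qed
  thus "PL r (W4 r)" "PU r (W4 r)" by auto
qed

lemma case3:
  assumes r: "r < a" and c1: "\<not> 3 \<le> Z r 0" and c2: "\<not> 2 \<le> Z r 0 + Z r 1" and c3: "1 \<le> Z r 0 + Z r 1 + Z r 2"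
  shows "PL r (W4 r)" "PU r (W4 r)"
proof -
  have Wd: "W4 r = 2 * int b - int (Z r 0 + Z r 1 + Z r 2 - 1) * int q" using c1 c2 c3 by (simp add: W4_def)
  have Zq2: "int (Z r 2) * int q < int b" using Zq[OF r] by simp
  have z01: "Z r 0 \<le> Z r 1" by (rule Zmono) simp
  have z12: "Z r 1 \<le> Z r 2" by (rule Zmono) simp
  have Z0: "Z r 0 = 0" using c2 z01 by linarith
  consider "Z r 1 = 0" | "Z r 1 = 1" using c2 by linarith
  hence "PL r (W4 r) \<and> PU r (W4 r)"
  proof cases
    case 1
    obtain m where mZ: "Z r 2 = m + 1" using c3 1 Z0 by (metis add.commute add_0 le_Suc_ex Suc_eq_plus1 add_le_cancel_left)
    have W: "W4 r = 2 * int b - int m * int q" using Wd 1 Z0 mZ by simp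
    have mq: "int m * int q \<le> int b" using Zq2 mZ qmono[of m "m+1"] by simp
    have PL: "PL r (W4 r)" unfolding PL_def
    proof (intro exI[of _ "{(0,0),(1,0),(2,m+1),(2,m)}"] conjI)
      show "card {(0,0),(1,0),(2,m+1),(2::nat,m)} = 4" by (rule card4) simp
      show "\<forall>(s,z)\<in>{(0,0),(1,0),(2,m+1),(2::nat,m)}. f*z \<le> r + a*s \<and> w s z \<le> W4 r"
        unfolding W w_def using mem[of "m+1" r 2] mem[of m r 2] mZ mq
        by (auto simp: algebra_simps)
    qed simp
    have PU: "PU r (W4 r)" unfolding PU_def
    proof (intro exI[of _ "{(0,0),(1,0),(2,m+1)}"] conjI allI impI)
      show "card {(0,0),(1,0),(2::nat,m+1)} \<le> 3" by (rule card3)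
      fix s z assume p: "f*z \<le> r + a*s" and lt: "w s z < W4 r"
      have Wb: "W4 r \<le> 2 * int b" unfolding W by simp
      from col[OF r p] show "(s,z) \<in> {(0,0),(1,0),(2,m+1)}"
      proof (elim disjE conjE)
        assume "s = 2" "z \<le> Z r 2"
        moreover have "int m * int q < int z * int q" using lt \<open>s = 2\<close> unfolding W w_def by simp
        hence "m < z" by (rule qcancel)
        ultimately show ?thesis using mZ by auto
      qed (use 1 Z0 lt Wb in auto)
    qed simp
    show ?thesis using PL PU by simp
  next
    case 2
    define m where "m = Z r 2"
    have W: "W4 r = 2 * int b - int m * int q" using Wd 2 Z0 m_def by simp
    have mq: "int m * int q \<le> int b" using Zq2 m_def by simp
    have m1: "1 \<le> m" using z12 2 m_def by simp
    have PL: "PL r (W4 r)" unfolding PL_def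
    proof (intro exI[of _ "{(0,0),(1,1),(1,0),(2,m)}"] conjI)
      show "card {(0,0),(1,1),(1,0),(2::nat,m)} = 4" by (rule card4) simp
      have "int q \<le> int m * int q" using qmono[OF m1] by simp
      thus "\<forall>(s,z)\<in>{(0,0),(1,1),(1,0),(2::nat,m)}. f*z \<le> r + a*s \<and> w s z \<le> W4 r"
        unfolding W w_def using mem[of 1 r 1] mem[of m r 2] m_def mq 2
        by (auto simp: algebra_simps)
    qed simp
    have PU: "PU r (W4 r)" unfolding PU_def
    proof (intro exI[of _ "{(0,0),(1,1),(1,0)}"] conjI allI impI)
      show "card {(0,0),(1,1),(1::nat,0::nat)} \<le> 3" by (rule card3)
      fix s z assume p: "f*z \<le> r + a*s" and lt: "w s z < W4 r"
      have Wb: "W4 r \<le> 2 * int b" unfolding W by simp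
      from col[OF r p] show "(s,z) \<in> {(0,0),(1,1),(1,0)}"
      proof (elim disjE conjE)
        assume "s = 2" "z \<le> Z r 2"
        moreover have "int m * int q < int z * int q" using lt \<open>s = 2\<close> unfolding W w_def by simp
        hence "m < z" by (rule qcancel)
        ultimately show ?thesis using m_def by auto
      next
        assume "s = 1" "z \<le> Z r 1"
        thus ?thesis using 2 by auto
      qed (use Z0 lt Wb in auto)
    qed simp
    show ?thesis using PL PU by simp
  qed
  thus "PL r (W4 r)" "PU r (W4 r)" by auto
qed

lemma case4:
  assumes r: "r < a" and c1: "\<not> 3 \<le> Z r 0" and c2: "\<not> 2 \<le> Z r 0 + Z r 1" and c3: "\<not> 1 \<le> Z r 0 + Z r 1 + Z r 2"
  shows "PL r (W4 r)" "PU r (W4 r)"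
proof -
  define m where "m = Z r 3"
  have W: "W4 r = 3 * int b - int m * int q" using c1 c2 c3 m_def by (simp add: W4_def)
  have Zs: "Z r 0 = 0" "Z r 1 = 0" "Z r 2 = 0" using c3 by auto
  have mq: "int m * int q \<le> int b" using Zq[OF r, of 3] m_def by simp
  show PL: "PL r (W4 r)" unfolding PL_def
  proof (intro exI[of _ "{(0,0),(1,0),(2,0),(3,m)}"] conjI)
    show "card {(0,0),(1,0),(2,0),(3::nat,m)} = 4" by (rule card4) simp
    show "\<forall>(s,z)\<in>{(0,0),(1,0),(2,0),(3::nat,m)}. f*z \<le> r + a*s \<and> w s z \<le> W4 r"
      unfolding W w_def using mem[of m r 3] m_def mq
      by (auto simp: algebra_simps)
  qed simp
  show PU: "PU r (W4 r)" unfolding PU_def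
  proof (intro exI[of _ "{(0,0),(1,0),(2,0)}"] conjI allI impI)
    show "card {(0,0),(1,0),(2::nat,0::nat)} \<le> 3" by (rule card3)
    fix s z assume p: "f*z \<le> r + a*s" and lt: "w s z < W4 r"
    have Wb: "W4 r \<le> 3 * int b" unfolding W by simp
    from col[OF r p] show "(s,z) \<in> {(0,0),(1,0),(2,0)}"
    proof (elim disjE conjE)
      assume "s = 3" "z \<le> Z r 3"
      moreover have "int m * int q < int z * int q" using lt \<open>s = 3\<close> unfolding W w_def by simp
      hence "m < z" by (rule qcancel)
      ultimately show ?thesis using m_def by auto
    qed (use Zs lt Wb in auto)
  qed simp
qed

lemma key: assumes "r < a" shows "PL r (W4 r)" "PU r (W4 r)"
  using case1[OF assms] case2[OF assms] case3[OF assms] case4[OF assms] by blast+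

lemma ex_pt: assumes r: "r < a" shows "\<exists>s z. f*z \<le> r + a*s \<and> w s z = W4 r"
proof -
  obtain S where S: "finite S" "card S = 4" "\<forall>(s,z)\<in>S. f*z \<le> r + a*s \<and> w s z \<le> W4 r"
    using key(1)[OF r] unfolding PL_def by blast
  obtain S' where S': "finite S'" "card S' \<le> 3" "\<forall>s z. f*z \<le> r + a*s \<longrightarrow> w s z < W4 r \<longrightarrow> (s,z) \<in> S'"
    using key(2)[OF r] unfolding PU_def by blast
  have "\<not> S \<subseteq> S'"
  proof
    assume "S \<subseteq> S'"
    hence "card S \<le> card S'" using S'(1) by (simp add: card_mono)
    thus False using S(2) S'(2) by simp
  qed
  then obtain s z where p: "(s,z) \<in> S" "(s,z) \<notin> S'" by auto
  have "f*z \<le> r + a*s" "w s z \<le> W4 r" using S(3) p(1) by auto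
  moreover have "\<not> w s z < W4 r" using S'(3) p(2) \<open>f*z \<le> r + a*s\<close> by blast
  ultimately show ?thesis by force
qed

end

context setup3 begin

lemma cint: "int c = int f * int b - int q * int a"
  using ceq by (metis add_diff_cancel_right' of_nat_add of_nat_mult)

lemma rep_decomp:
  assumes r: "r < a" and e: "a*x0 + b*y + c*z = r*b mod a + a*x"
  shows "(y + f*z) mod a = r" "f*z \<le> r + a*((y + f*z) div a)"
    "int x0 = int x - int (r*b div a) - w ((y + f*z) div a) z"
proof -
  define t where "t = y + f*z"
  define K where "K = r*b div a"
  define j where "j = r*b mod a"
  have rb: "int r * int b = int a * int K + int j" unfolding K_def j_def
    by (metis of_nat_add of_nat_mult div_mult_mod_eq mult.commute)
  have e': "int a * int x0 + int b * int y + int c * int z = int j + int a * int x"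
    using e unfolding j_def by (metis of_nat_add of_nat_mult)
  have e2: "int a * int x0 + int b * int t - int q * int a * int z = int j + int a * int x"
    using e' unfolding t_def cint by (simp add: algebra_simps)
  have "int b * (int t - int r) = int a * (int x - int x0 + int q * int z - int K)"
    using e2 rb by (simp add: algebra_simps)
  hence "int a dvd int b * (int t - int r)" by simp
  moreover have "coprime (int a) (int b)" using cop by simp
  ultimately have "int a dvd int t - int r" using coprime_dvd_mult_right_iff by blast
  hence "int t mod int a = int r mod int a" by (simp add: mod_eq_dvd_iff)
  hence "int (t mod a) = int r" using r by (simp add: zmod_int)
  hence tm: "t mod a = r" by simp
  thus "(y + f*z) mod a = r" unfolding t_def .
  have td: "t = r + a*(t div a)" using tm by (metis div_mult_mod_eq add.commute mult.commute)
  show "f*z \<le> r + a*((y + f*z) div a)" using td unfolding t_def by linarith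
  have "int a * int x0 + int b * (int r + int a * int (t div a)) - int q * int a * int z = int j + int a * int x"
    using e2 td by (metis of_nat_add of_nat_mult)
  hence "int a * (int x0 + int b * int (t div a) - int q * int z) = int a * (int x - int K)"
    using rb by (simp add: algebra_simps)
  hence "int x0 + int b * int (t div a) - int q * int z = int x - int K" using a0 by simp
  thus "int x0 = int x - int (r*b div a) - w ((y + f*z) div a) z"
    unfolding w_def t_def K_def by (simp add: algebra_simps)
qed

lemma len3: "length xs = 3 \<Longrightarrow> \<exists>u v t. xs = [u,v,t]"
  by (auto simp: numeral_3_eq_3 length_Suc_conv)

lemma finR: "finite {xs. length xs = 3 \<and> a*xs!0 + b*xs!1 + c*xs!2 = n}"
proof (rule finite_subset)
  show "{xs. length xs = 3 \<and> a*xs!0 + b*xs!1 + c*xs!2 = n} \<subseteq> {xs. set xs \<subseteq> {..n} \<and> length xs = 3}"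
  proof (rule subsetI)
    fix xs :: "nat list" assume "xs \<in> {xs. length xs = 3 \<and> a*xs!0 + b*xs!1 + c*xs!2 = n}"
    hence l: "length xs = 3" and e: "a*xs!0 + b*xs!1 + c*xs!2 = n" by auto
    obtain u v t where xs: "xs = [u,v,t]" using len3[OF l] by blast
    have e2: "a*u + b*v + c*t = n" using e xs by simp
    have "u \<le> a*u" "v \<le> b*v" "t \<le> c*t" using a0 b0 c0 by auto
    hence "u \<le> n" "v \<le> n" "t \<le> n" using e2 by linarith+
    thus "xs \<in> {xs. set xs \<subseteq> {..n} \<and> length xs = 3}" using xs by auto
  qed
  show "finite {xs. set xs \<subseteq> {..n} \<and> length xs = 3}" by (rule finite_lists_length_eq) simp
qed

lemma value_nonneg: assumes "f*z \<le> r + a*s" shows "0 \<le> int (r*b) + int a * w s z"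
proof -
  define y where "y = r + a*s - f*z"
  have y: "int y = int r + int a * int s - int f * int z" using assms by (simp add: y_def of_nat_diff)
  have "int (y*b + z*c) = int y * int b + int z * int c" by simp
  also have "\<dots> = int (r*b) + int a * w s z" unfolding y cint w_def by (simp add: algebra_simps)
  finally have "int (y*b + z*c) = int (r*b) + int a * w s z" .
  thus ?thesis by (metis of_nat_0_le_iff)
qed

lemma W4_nonneg: assumes r: "r < a" shows "0 \<le> int (r*b div a) + W4 r"
proof -
  obtain s z where p: "f*z \<le> r + a*s" "w s z = W4 r" using ex_pt[OF r] by blast
  have v: "0 \<le> int (r*b) + int a * W4 r" using value_nonneg[OF p(1)] p(2) by simp
  have rb: "int (r*b) = int a * int (r*b div a) + int (r*b mod a)"
    by (metis of_nat_add of_nat_mult div_mult_mod_eq mult.commute)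
  have "r*b mod a < a" using a0 by simp
  hence "int a * (int (r*b div a) + W4 r) > - int a" using v rb by (simp add: algebra_simps)
  hence "int a * (-1) < int a * (int (r*b div a) + W4 r)" by simp
  hence "-1 < int (r*b div a) + W4 r" using a0 by (metis mult_less_cancel_left_pos of_nat_0_less_iff)
  thus ?thesis by simp
qed

lemma class_iff: assumes r: "r < a"
  shows "num_reps (r*b mod a + a*x) [a,b,c] \<le> 3 \<longleftrightarrow> int x < int (r*b div a) + W4 r"
proof -
  define n where "n = r*b mod a + a*x"
  define R where "R = {xs. length xs = 3 \<and> a*xs!0 + b*xs!1 + c*xs!2 = n}"
  define K where "K = int (r*b div a)"
  define X where "X = int x - K"
  have nr: "num_reps n [a,b,c] = card R" unfolding R_def by (rule num_reps3)
  have fR: "finite R" unfolding R_def by (rule finR)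
  have rb: "int (r*b) = int a * K + int (r*b mod a)" unfolding K_def
    by (metis of_nat_add of_nat_mult div_mult_mod_eq mult.commute)
  show ?thesis
  proof (cases "int x < K + W4 r")
    case True
    obtain S' where S': "finite S'" "card S' \<le> 3" "\<forall>s z. f*z \<le> r + a*s \<longrightarrow> w s z < W4 r \<longrightarrow> (s,z) \<in> S'"
      using key(2)[OF r] unfolding PU_def by blast
    define h where "h = (\<lambda>xs::nat list. ((xs!1 + f*xs!2) div a, xs!2))"
    have hR: "h ` R \<subseteq> S'" unfolding image_subset_iff
    proof (rule ballI)
      fix xs assume "xs \<in> R"
      hence e: "a*xs!0 + b*xs!1 + c*xs!2 = r*b mod a + a*x" unfolding R_def n_def by simp
      note d = rep_decomp[OF r e]
      have "w ((xs!1 + f*xs!2) div a) (xs!2) < W4 r" using d(3) True unfolding K_def by linarith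
      thus "h xs \<in> S'" using S'(3) d(2) unfolding h_def by blast
    qed
    have inj: "inj_on h R"
    proof (rule inj_onI)
      fix xs xs' assume x1: "xs \<in> R" and x2: "xs' \<in> R" and hh: "h xs = h xs'"
      have e: "a*xs!0 + b*xs!1 + c*xs!2 = r*b mod a + a*x" using x1 unfolding R_def n_def by simp
      have e': "a*xs'!0 + b*xs'!1 + c*xs'!2 = r*b mod a + a*x" using x2 unfolding R_def n_def by simp
      note d = rep_decomp[OF r e] and d' = rep_decomp[OF r e']
      have z: "xs!2 = xs'!2" and s: "(xs!1 + f*xs!2) div a = (xs'!1 + f*xs'!2) div a" using hh unfolding h_def by auto
      have t: "xs!1 + f*xs!2 = xs'!1 + f*xs'!2"
        using d(1) d'(1) s by (metis div_mult_mod_eq)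
      hence y: "xs!1 = xs'!1" using z by simp
      have x0: "xs!0 = xs'!0" using d(3) d'(3) z s by (metis of_nat_eq_iff)
      have l: "length xs = 3" "length xs' = 3" using x1 x2 unfolding R_def by auto
      show "xs = xs'"
      proof (rule nth_equalityI)
        show "length xs = length xs'" using l by simp
        fix i assume "i < length xs"
        hence "i = 0 \<or> i = 1 \<or> i = 2" using l by auto
        thus "xs!i = xs'!i" using x0 y z by auto
      qed
    qed
    have "card R \<le> 3" using card_inj_on_le[OF inj hR S'(1)] S'(2) by simp
    thus ?thesis using True nr n_def K_def by simp
  next
    case False
    obtain S where S: "finite S" "card S = 4" "\<forall>(s,z)\<in>S. f*z \<le> r + a*s \<and> w s z \<le> W4 r"
      using key(1)[OF r] unfolding PL_def by blast
    define g where "g = (\<lambda>(s,z). [nat (X - w s z), r + a*s - f*z, z])"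
    have gS: "g ` S \<subseteq> R"
    proof clarify
      fix s z assume "(s,z) \<in> S"
      hence p: "f*z \<le> r + a*s" "w s z \<le> W4 r" using S(3) by auto
      have X: "w s z \<le> X" using p(2) False unfolding X_def by linarith
      have "int (a * nat (X - w s z) + b*(r + a*s - f*z) + c*z) = int a * (X - w s z) + int b * (int r + int a * int s - int f * int z) + int c * int z"
        using X p(1) by (simp add: of_nat_diff)
      also have "\<dots> = int a * X + int (r*b)" unfolding w_def cint by (simp add: algebra_simps)
      also have "\<dots> = int n" unfolding n_def X_def using rb by (simp add: algebra_simps)
      finally have "a * nat (X - w s z) + b*(r + a*s - f*z) + c*z = n" by (metis of_nat_eq_iff)
      thus "g (s,z) \<in> R" unfolding g_def R_def by simp
    qed
    have inj: "inj_on g S"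
    proof (rule inj_onI, clarify)
      fix s z s' z' assume p1: "(s,z) \<in> S" and p2: "(s',z') \<in> S" and gg: "g (s,z) = g (s',z')"
      have m1: "f*z \<le> r + a*s" and m2: "f*z' \<le> r + a*s'" using S(3) p1 p2 by auto
      have z: "z = z'" using gg unfolding g_def by simp
      have "r + a*s - f*z = r + a*s' - f*z'" using gg unfolding g_def by (simp only: prod.case list.inject) metis
      have e3: "r + a*s - f*z' = r + a*s' - f*z'" using \<open>r + a*s - f*z = r + a*s' - f*z'\<close> z by simp
      have m1': "f*z' \<le> r + a*s" using m1 z by simp
      have "a*s = a*s'" using e3 m1' m2 by linarith
      hence "s = s'" using a0 by simp
      thus "s = s' \<and> z = z'" using z by simp
    qed
    have "card (g ` S) = 4" using card_image[OF inj] S(2) by simp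
    hence "4 \<le> card R" using card_mono[OF fR gS] by simp
    thus ?thesis using False nr n_def K_def by simp
  qed
qed

theorem main: "int (sylvester_p 3 [a,b,c]) = (\<Sum>r<a. int (r*b div a) + W4 r)"
proof -
  have "sylvester_p 3 [a,b,c] = (\<Sum>r<a. nat (int (r*b div a) + W4 r))"
    unfolding sylvester_p_def
  proof (rule card_classes[OF a0 bij_mult_mod[OF a0 cop]])
    fix r x assume r: "r < a"
    show "num_reps (r*b mod a + a*x) [a,b,c] \<le> 3 \<longleftrightarrow> x < nat (int (r*b div a) + W4 r)"
      using class_iff[OF r, of x] by linarith
  qed
  hence "int (sylvester_p 3 [a,b,c]) = (\<Sum>r<a. int (nat (int (r*b div a) + W4 r)))" by simp
  also have "\<dots> = (\<Sum>r<a. int (r*b div a) + W4 r)"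
    by (rule sum.cong) (use W4_nonneg in auto)
  finally show ?thesis .
qed

end

lemma sum_split: "(\<Sum>r<A+B. g r) = (\<Sum>r<A. g r) + (\<Sum>r<B. g (A + r))" for g :: "nat \<Rightarrow> 'a::comm_monoid_add"
  by (induction B) (simp_all add: add.assoc)

lemma hermite: assumes "f > 0" shows "(\<Sum>r<f. (x + r) div f) = (x::nat)"
proof (induction x)
  case 0
  have "(\<Sum>r<f. (0 + r) div f) = (\<Sum>r<f. 0::nat)" by (rule sum.cong) auto
  thus ?case by simp
next
  case (Suc x)
  let ?g = "\<lambda>r. (x + r) div f"
  have "?g 0 + (\<Sum>r<f. ?g (Suc r)) = (\<Sum>r<Suc f. ?g r)" by (rule sum.lessThan_Suc_shift[symmetric])
  also have "\<dots> = (\<Sum>r<f. ?g r) + ?g f" by simp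
  also have "?g f = x div f + 1" using assms by simp
  finally have "(\<Sum>r<f. ?g (Suc r)) = x + 1" using Suc by simp
  thus ?case by simp
qed

lemma fs1: fixes f m x :: nat assumes "f > 0"
  shows "2 * (\<Sum>r<m*f. (x + r) div f) = 2*m*x + f*m*(m-1)"
proof (induction m)
  case 0 thus ?case by simp
next
  case (Suc m)
  have sm: "Suc m * f = m*f + f" by simp
  have "(\<Sum>r<Suc m*f. (x + r) div f) = (\<Sum>r<m*f. (x + r) div f) + (\<Sum>r<f. (x + (m*f + r)) div f)"
    unfolding sm by (rule sum_split[where A="m*f" and B=f and g="\<lambda>r. (x+r) div f"])
  also have "(\<Sum>r<f. (x + (m*f + r)) div f) = (\<Sum>r<f. ((x + m*f) + r) div f)" by (simp add: add.assoc)
  also have "\<dots> = x + m*f" using hermite[OF assms] by blast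
  finally have "2 * (\<Sum>r<Suc m*f. (x + r) div f) = 2*m*x + f*m*(m-1) + 2*(x + m*f)" using Suc by simp
  thus ?case by (cases m) (simp_all add: algebra_simps)
qed

lemma fs2: fixes f m e :: nat assumes "f > 0" "e \<le> f"
  shows "2 * (\<Sum>r<m*f+e. r div f) = f*m*(m-1) + 2*m*e"
proof -
  have "(\<Sum>r<m*f+e. r div f) = (\<Sum>r<m*f. (0 + r) div f) + (\<Sum>r<e. (m*f + r) div f)"
    using sum_split[where A="m*f" and B=e and g="\<lambda>r. r div f"] by simp
  also have "(\<Sum>r<e. (m*f + r) div f) = (\<Sum>r<e. m)"
  proof (rule sum.cong)
    fix r assume "r \<in> {..<e}"
    hence "r < f" using assms by simp
    thus "(m*f + r) div f = m" using assms by (intro div_nat_eqI) (auto simp: algebra_simps)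
  qed simp
  finally have eq: "(\<Sum>r<m*f+e. r div f) = (\<Sum>r<m*f. (0 + r) div f) + e*m" by simp
  have h: "2 * (\<Sum>r<m*f. (0 + r) div f) = f*m*(m-1)" using fs1[OF assms(1), where m=m and x=0] by (simp only: mult_0_right add_0)
  show ?thesis unfolding eq using h by (simp add: algebra_simps)
qed

lemma fib_c: "fib (i + (m+2)) + fib m * fib i = fib (m+2) * fib (i+2)"
proof (induction m rule: fib.induct)
  case 1 thus ?case by simp
next
  case 2 thus ?case by (simp add: fib_plus_2 numeral_3_eq_3 numeral_2_eq_2)
next
  case (3 n)
  have e1: "fib (i + (Suc (Suc n) + 2)) = fib (i + (Suc n + 2)) + fib (i + (n + 2))"
    by (metis add_Suc_right fib.simps(3) add_2_eq_Suc')
  have e2: "fib (Suc (Suc n)) = fib (Suc n) + fib n" by simp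
  have e3: "fib (Suc (Suc n) + 2) = fib (Suc n + 2) + fib (n + 2)" by (simp add: fib_plus_2)
  show ?case unfolding e1 e2 e3 distrib_right using 3 by linarith
qed

lemma fib_2le: "n \<ge> 2 \<Longrightarrow> fib n \<le> 2 * fib (n-1)"
proof -
  assume "n \<ge> 2"
  then obtain m where "n = m + 2" by (metis add.commute le_Suc_ex)
  thus ?thesis using fib_mono[of m "m+1"] by (simp add: fib_plus_2)
qed

lemma fib_sep: assumes "i \<ge> 3" "k \<ge> 3" shows "5 * fib i * fib (k-2) \<le> fib k * fib (i+2)"
proof -
  have "fib (i+2) = fib (i+1) + fib i" by (simp add: fib_plus_2)
  moreover have "fib (i+1) = fib i + fib (i-1)"
  proof -
    define j where "j = i - 1"
    have "i = j + 1" using assms unfolding j_def by simp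
    thus ?thesis by (simp add: fib_plus_2[of j, simplified])
  qed
  moreover have "fib i \<le> 2 * fib (i-1)" using fib_2le assms by simp
  ultimately have A: "5 * fib i \<le> 2 * fib (i+2)" by linarith
  have "fib k = fib (k-1) + fib (k-2)"
  proof -
    define j where "j = k - 2"
    have "k = j + 2" using assms unfolding j_def by simp
    thus ?thesis by (simp add: fib_plus_2)
  qed
  moreover have "fib (k-2) \<le> fib (k-1)" by (rule fib_mono) simp
  ultimately have B: "2 * fib (k-2) \<le> fib k" by linarith
  have C1: "(5 * fib i) * fib (k-2) \<le> (2 * fib (i+2)) * fib (k-2)" using A by (rule mult_le_mono1)
  have C2: "fib (i+2) * (2 * fib (k-2)) \<le> fib (i+2) * fib k" using B by (rule mult_le_mono2)
  have E1: "(2 * fib (i+2)) * fib (k-2) = fib (i+2) * (2 * fib (k-2))" by (simp only: ac_simps)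
  have E2: "fib (i+2) * fib k = fib k * fib (i+2)" by (rule mult.commute)
  show ?thesis using C1 C2 unfolding E1 E2 by (rule le_trans)
qed

lemma fib_cop: "coprime (fib i) (fib (i+2))"
proof -
  have d: "gcd i (i+2) dvd 2" by (metis dvd_add_right_iff gcd_dvd1 gcd_dvd2)
  have p: "gcd i (i+2) > 0" by simp
  have "gcd i (i+2) \<le> 2" using dvd_imp_le[OF d] by simp
  hence "gcd i (i+2) = 1 \<or> gcd i (i+2) = 2" using p by linarith
  hence "gcd i (i+2) \<in> {1,2}" by auto
  hence eq1: "fib (gcd i (i+2)) = 1" by (auto simp: numeral_2_eq_2)
  have eq2: "gcd (fib i) (fib (i+2)) = fib (gcd i (i+2))" by (rule fib_gcd[symmetric])
  have "gcd (fib i) (fib (i+2)) = 1" by (simp only: eq2 eq1)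
  thus ?thesis by (simp only: coprime_iff_gcd_eq_1)
qed

lemma sum_ivl_const: fixes g :: "nat \<Rightarrow> int"
  assumes "m \<le> n" "\<And>r. m \<le> r \<Longrightarrow> r < n \<Longrightarrow> g r = v"
  shows "(\<Sum>r\<in>{m..<n}. g r) = int (n - m) * v"
proof -
  have "(\<Sum>r\<in>{m..<n}. g r) = (\<Sum>r\<in>{m..<n}. v)" by (rule sum.cong) (use assms in auto)
  thus ?thesis by simp
qed

context setup3 begin

lemma Zeq: "k*f \<le> r + a*s \<Longrightarrow> r + a*s < (k+1)*f \<Longrightarrow> Z r s = k"
  unfolding Z_def by (intro div_nat_eqI) (auto simp: mult.commute)

lemma sum_a: assumes "4*a \<le> f" shows "(\<Sum>r<a. W4 r) = 3 * int a * int b"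
proof -
  have "W4 r = 3 * int b" if r: "r < a" for r
  proof -
    have "Z r s = 0" if "s \<le> 3" for s
    proof (rule Zeq)
      have "a*s \<le> a*3" using that by simp
      hence "r + a*s < f" using r assms by linarith
      thus "r + a*s < (0+1)*f" by simp
    qed simp
    thus ?thesis by (simp add: W4_def)
  qed
  hence "(\<Sum>r<a. W4 r) = (\<Sum>r<a. 3 * int b)" by (intro sum.cong) auto
  thus ?thesis by simp
qed

lemma sum_b: assumes "f = a" shows "(\<Sum>r<a. W4 r) = int a * (2 * int b - 2 * int q)"
proof -
  have "W4 r = 2 * int b - 2 * int q" if r: "r < a" for r
  proof -
    have "Z r s = s" for s by (rule Zeq) (use r assms in \<open>auto simp: algebra_simps\<close>)
    thus ?thesis by (simp add: W4_def)
  qed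
  hence "(\<Sum>r<a. W4 r) = (\<Sum>r<a. 2 * int b - 2 * int q)" by (intro sum.cong) auto
  thus ?thesis by simp
qed

lemma sum_c: assumes A: "a = f + g" and F: "f = g + q" and Q: "q \<le> g"
  shows "(\<Sum>r<a. W4 r) = 2 * int f * (int b - int q)"
proof -
  have q0': "q > 0" by (rule q0)
  have v1: "W4 r = 2 * int b - 3 * int q" if "r < q" for r
  proof -
    have "Z r 0 = 0" "Z r 1 = 1" "Z r 2 = 3" by (rule Zeq; use that A F Q in simp)+
    thus ?thesis by (simp add: W4_def)
  qed
  have v2: "W4 r = int b" if "q \<le> r" "r < f" for r
  proof -
    have "Z r 0 = 0" "Z r 1 = 2" by (rule Zeq; use that A F Q in simp)+
    thus ?thesis by (simp add: W4_def)
  qed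
  have v3: "W4 r = int b - int q" if "f \<le> r" "r < f + q" for r
  proof -
    have "Z r 0 = 1" "Z r 1 = 2" by (rule Zeq; use that A F Q in simp)+
    thus ?thesis by (simp add: W4_def)
  qed
  have v4: "W4 r = int b - 2 * int q" if "f + q \<le> r" "r < a" for r
  proof -
    have "Z r 0 = 1" "Z r 1 = 3" by (rule Zeq; use that A F Q in simp)+
    thus ?thesis by (simp add: W4_def)
  qed
  have "(\<Sum>r<a. W4 r) = (\<Sum>r\<in>{0..<q}. W4 r) + (\<Sum>r\<in>{q..<f}. W4 r) + (\<Sum>r\<in>{f..<f+q}. W4 r) + (\<Sum>r\<in>{f+q..<a}. W4 r)"
    using A F Q by (simp add: atLeast0LessThan[symmetric] sum.atLeastLessThan_concat)
  also have "\<dots> = int q * (2 * int b - 3 * int q) + int (f - q) * int b + int q * (int b - int q) + int (a - (f+q)) * (int b - 2 * int q)"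
    using A F Q v1 v2 v3 v4 by (simp add: sum_ivl_const)
  also have "\<dots> = 2 * int f * (int b - int q)" using A F Q by (simp add: of_nat_diff algebra_simps)
  finally show ?thesis .
qed

lemma sum_d: assumes A: "a = 2*f + h" and F: "f = h + q" and Q: "q \<le> h"
  shows "(\<Sum>r<a. W4 r) = int a * int b - int q * (9 * int h + int q)"
proof -
  have q0': "q > 0" by (rule q0)
  have v1: "W4 r = int b" if "r < q" for r
  proof -
    have "Z r 0 = 0" "Z r 1 = 2" by (rule Zeq; use that A F Q in simp)+
    thus ?thesis by (simp add: W4_def)
  qed
  have v2: "W4 r = int b - int q" if "q \<le> r" "r < f" for r
  proof -
    have "Z r 0 = 0" "Z r 1 = 3" by (rule Zeq; use that A F Q in simp)+
    thus ?thesis by (simp add: W4_def)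
  qed
  have v3: "W4 r = int b - 2 * int q" if "f \<le> r" "r < f + q" for r
  proof -
    have "Z r 0 = 1" "Z r 1 = 3" by (rule Zeq; use that A F Q in simp)+
    thus ?thesis by (simp add: W4_def)
  qed
  have v4: "W4 r = int b - 3 * int q" if "f + q \<le> r" "r < 2*f" for r
  proof -
    have "Z r 0 = 1" "Z r 1 = 4" by (rule Zeq; use that A F Q in simp)+
    thus ?thesis by (simp add: W4_def)
  qed
  have v5: "W4 r = int b - 4 * int q" if "2*f \<le> r" "r < 2*f + q" for r
  proof -
    have "Z r 0 = 2" "Z r 1 = 4" by (rule Zeq; use that A F Q in simp)+
    thus ?thesis by (simp add: W4_def)
  qed
  have v6: "W4 r = int b - 5 * int q" if "2*f + q \<le> r" "r < a" for r
  proof -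
    have "Z r 0 = 2" "Z r 1 = 5" by (rule Zeq; use that A F Q in simp)+
    thus ?thesis by (simp add: W4_def)
  qed
  have "(\<Sum>r<a. W4 r) = (\<Sum>r\<in>{0..<q}. W4 r) + (\<Sum>r\<in>{q..<f}. W4 r) + (\<Sum>r\<in>{f..<f+q}. W4 r)
     + (\<Sum>r\<in>{f+q..<2*f}. W4 r) + (\<Sum>r\<in>{2*f..<2*f+q}. W4 r) + (\<Sum>r\<in>{2*f+q..<a}. W4 r)"
    using A F Q by (simp add: atLeast0LessThan[symmetric] sum.atLeastLessThan_concat)
  also have "\<dots> = int q * int b + int (f - q) * (int b - int q) + int q * (int b - 2 * int q)
     + int (2*f - (f+q)) * (int b - 3 * int q) + int q * (int b - 4 * int q) + int (a - (2*f+q)) * (int b - 5 * int q)"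
    using A F Q v1 v2 v3 v4 v5 v6 by (simp add: sum_ivl_const)
  also have "\<dots> = int a * int b - int q * (9 * int h + int q)" using A F Q by (simp add: of_nat_diff algebra_simps)
  finally show ?thesis .
qed

lemma sum_e: assumes A: "3*f < a"
  shows "2 * (\<Sum>r<a. W4 r) = 6 * int f * int b - int q * (int f * int ((a-1) div f) * (int ((a-1) div f) - 1)
     + 2 * int ((a-1) div f) * (int a - int ((a-1) div f) * int f) + 12 * int f)"
proof -
  define \<rho> where "\<rho> = (a-1) div f"
  define e where "e = a - \<rho>*f"
  have am: "a - 1 = \<rho>*f + (a-1) mod f" unfolding \<rho>_def by simp
  have mf: "(a-1) mod f < f" using f0 by simp
  have ae: "a = \<rho>*f + e" and e1: "1 \<le> e" and ef: "e \<le> f" using am mf A unfolding e_def by auto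
  have "3 \<le> \<rho>" unfolding \<rho>_def
  proof -
    have "(3*f) div f \<le> (a-1) div f" using A by (intro div_le_mono) simp
    thus "3 \<le> (a-1) div f" using f0 by simp
  qed
  then obtain t where t: "\<rho> = t + 3" by (metis add.commute le_Suc_ex)
  have a3: "a = 3*f + (t*f + e)" using ae t by (simp add: algebra_simps)
  have w1: "W4 r = int b - (int (r div f) + int ((a + r) div f) - 2) * int q" if r: "r < 3*f" for r
  proof -
    have z0: "Z r 0 = r div f" by (simp add: Z_def)
    have z1: "Z r 1 = (a + r) div f" by (simp add: Z_def add.commute)
    have "r div f < 3" using r f0 by (simp add: div_less_iff_less_mult)
    moreover have "3 \<le> (a + r) div f"
    proof -
      have "(3*f) div f \<le> (a + r) div f" using A by (intro div_le_mono) simp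
      thus ?thesis using f0 by simp
    qed
    ultimately show ?thesis unfolding W4_def z0 z1 by (simp add: of_nat_diff)
  qed
  have w2: "W4 (3*f + r) = - int (r div f) * int q" for r
  proof -
    have "Z (3*f + r) 0 = r div f + 3" unfolding Z_def using f0 by simp
    thus ?thesis unfolding W4_def by simp
  qed
  have split: "(\<Sum>r<a. W4 r) = (\<Sum>r<3*f. W4 r) + (\<Sum>r<t*f + e. W4 (3*f + r))"
    unfolding a3 by (rule sum_split)
  have p1: "(\<Sum>r<3*f. W4 r) = (\<Sum>r<3*f. int b - (int (r div f) + int ((a + r) div f) - 2) * int q)"
    by (rule sum.cong) (use w1 in auto)
  also have "\<dots> = int (3*f) * int b + 2 * int (3*f) * int q - int q * (int (\<Sum>r<3*f. (0 + r) div f) + int (\<Sum>r<3*f. (a + r) div f))"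
    by (simp add: sum_subtractf sum.distrib sum_distrib_left algebra_simps)
  finally have p1': "(\<Sum>r<3*f. W4 r) = int (3*f) * int b + 2 * int (3*f) * int q - int q * (int (\<Sum>r<3*f. (0 + r) div f) + int (\<Sum>r<3*f. (a + r) div f))" .
  have S0: "2 * (\<Sum>r<3*f. (0 + r) div f) = 6 * f" using fs1[OF f0, where m=3 and x=0] by simp
  have S1: "2 * (\<Sum>r<3*f. (a + r) div f) = 6 * a + 6 * f" using fs1[OF f0, where m=3 and x=a] by simp
  have p2: "(\<Sum>r<t*f + e. W4 (3*f + r)) = - int q * int (\<Sum>r<t*f + e. r div f)"
  proof -
    have "(\<Sum>r<t*f + e. W4 (3*f + r)) = (\<Sum>r<t*f + e. - int q * int (r div f))"
      by (rule sum.cong) (simp_all add: w2)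
    also have "\<dots> = - int q * (\<Sum>r<t*f + e. int (r div f))" by (simp add: sum_distrib_left)
    finally show ?thesis by (simp add: of_nat_sum)
  qed
  have S2: "2 * (\<Sum>r<t*f + e. r div f) = f*t*(t-1) + 2*t*e" using fs2[OF f0 ef] by simp
  have S2i: "2 * int (\<Sum>r<t*f + e. r div f) = int f * int t * (int t - 1) + 2 * int t * int e"
  proof -
    have "int (f*t*(t-1)) = int f * int t * (int t - 1)" by (cases t) (auto simp: algebra_simps)
    moreover have "int (2 * (\<Sum>r<t*f + e. r div f)) = int (f*t*(t-1) + 2*t*e)" using S2 by (simp only:)
    hence "2 * int (\<Sum>r<t*f + e. r div f) = int (f*t*(t-1)) + 2 * int t * int e" by simp
    ultimately show ?thesis by simp
  qed
  have S0i: "2 * int (\<Sum>r<3*f. (0 + r) div f) = 6 * int f" using S0 by linarith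
  have S1i: "2 * int (\<Sum>r<3*f. (a + r) div f) = 6 * int a + 6 * int f" using S1 by linarith
  have "2 * (\<Sum>r<a. W4 r) = 6 * int f * int b + 12 * int f * int q - int q * (2 * int (\<Sum>r<3*f. (0 + r) div f) + 2 * int (\<Sum>r<3*f. (a + r) div f))
      - int q * (2 * int (\<Sum>r<t*f + e. r div f))"
    unfolding split p1' p2 by (simp add: algebra_simps)
  also have "\<dots> = 6 * int f * int b + 12 * int f * int q - int q * (6 * int f + 6 * int a + 6 * int f)
      - int q * (int f * int t * (int t - 1) + 2 * int t * int e)" unfolding S0i S1i S2i by simp
  finally have L: "2 * (\<Sum>r<a. W4 r) = 6 * int f * int b + 12 * int f * int q - int q * (6 * int f + 6 * int a + 6 * int f)
      - int q * (int f * int t * (int t - 1) + 2 * int t * int e)" .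
  have ai: "int a = (int t + 3) * int f + int e" using ae t by simp
  have ei: "int a - int \<rho> * int f = int e" using ai t by (simp add: algebra_simps)
  show ?thesis unfolding \<rho>_def[symmetric] ei unfolding L t ai by (simp add: algebra_simps)
qed

end

context setup3 begin
lemma twice: "2 * int (sylvester_p 3 [a,b,c]) = (int a - 1)*(int b - 1) + 2*(\<Sum>r<a. W4 r)"
proof -
  have "2 * int (sylvester_p 3 [a,b,c]) = 2 * (\<Sum>r<a. int (r*b div a)) + 2 * (\<Sum>r<a. W4 r)"
    unfolding main by (simp add: sum.distrib algebra_simps)
  thus ?thesis using sylv_sum[OF cop a0 b0] by simp
qed
end

lemma setup_fib: assumes "i \<ge> 3" "k \<ge> 3"
  shows "setup3 (fib i) (fib (i+2)) (fib (i+k)) (fib k) (fib (k-2))"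
proof
  show "fib i > 0" "fib (i+2) > 0" "fib (i+k) > 0" "fib k > 0" "fib (k-2) > 0"
    using assms by (auto intro!: fib_neq_0_nat)
  show "coprime (fib i) (fib (i+2))" by (rule fib_cop)
  have kk: "k - 2 + 2 = k" using assms by simp
  have "fib (i + (k-2+2)) + fib (k-2) * fib i = fib (k-2+2) * fib (i+2)" by (rule fib_c)
  thus "fib (i+k) + fib (k-2) * fib i = fib k * fib (i+2)" by (simp only: kk)
  show "5 * fib i * fib (k-2) \<le> fib k * fib (i+2)" by (rule fib_sep[OF assms])
qed

lemma fib_rec': "n \<ge> 2 \<Longrightarrow> fib n = fib (n-1) + fib (n-2)"
proof -
  assume "n \<ge> 2"
  then obtain m where "n = m + 2" by (metis add.commute le_Suc_ex)
  thus ?thesis by (simp add: fib_plus_2)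
qed

lemma partA: assumes "i \<ge> 3" "k \<ge> i + 3"
  shows "real (sylvester_p 3 [fib i, fib (i+2), fib (i+k)])
        = (7 * real (fib i) * real (fib (i+2)) - real (fib i) - real (fib (i+2)) + 1) / 2"
proof -
  interpret S: setup3 "fib i" "fib (i+2)" "fib (i+k)" "fib k" "fib (k-2)"
    using setup_fib assms by simp
  have f1: "fib (i+1) = fib i + fib (i-1)" using fib_rec'[of "i+1"] assms by simp
  have f2: "fib (i+2) = fib (i+1) + fib i" by (simp add: fib_plus_2)
  have f3: "fib (i+3) = fib (i+2) + fib (i+1)" by (simp add: numeral_3_eq_3 numeral_2_eq_2)
  have f4: "fib i \<le> 2 * fib (i-1)" using fib_2le assms by simp
  have "fib (i+3) \<le> fib k" using assms by (intro fib_mono) simp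
  hence "4 * fib i \<le> fib k" using f1 f2 f3 f4 by linarith
  hence E: "2 * int (sylvester_p 3 [fib i, fib (i+2), fib (i+k)]) = (int (fib i) - 1)*(int (fib (i+2)) - 1) + 2*(3 * int (fib i) * int (fib (i+2)))"
    using S.twice S.sum_a by simp
  hence "real_of_int (2 * int (sylvester_p 3 [fib i, fib (i+2), fib (i+k)])) = real_of_int ((int (fib i) - 1)*(int (fib (i+2)) - 1) + 2*(3 * int (fib i) * int (fib (i+2))))"
    by (rule arg_cong)
  hence "2 * real (sylvester_p 3 [fib i, fib (i+2), fib (i+k)]) = (real (fib i) - 1)*(real (fib (i+2)) - 1) + 6 * real (fib i) * real (fib (i+2))"
    by simp
  thus ?thesis by (simp add: field_simps algebra_simps)
qed

lemma partB: assumes "i \<ge> 3"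
  shows "real (sylvester_p 3 [fib i, fib (i+2), fib (2*i)])
        = ((5 * real (fib i) - 1) * real (fib (i+2)) - real (fib i) + 1) / 2 - 2 * real (fib i) * real (fib (i-2))"
proof -
  interpret S: setup3 "fib i" "fib (i+2)" "fib (i+i)" "fib i" "fib (i-2)"
    using setup_fib assms by simp
  have E: "2 * int (sylvester_p 3 [fib i, fib (i+2), fib (i+i)]) = (int (fib i) - 1)*(int (fib (i+2)) - 1) + 2*(int (fib i) * (2 * int (fib (i+2)) - 2 * int (fib (i-2))))"
    using S.twice S.sum_b by simp
  hence "real_of_int (2 * int (sylvester_p 3 [fib i, fib (i+2), fib (i+i)])) = real_of_int ((int (fib i) - 1)*(int (fib (i+2)) - 1) + 2*(int (fib i) * (2 * int (fib (i+2)) - 2 * int (fib (i-2)))))"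
    by (rule arg_cong)
  hence "2 * real (sylvester_p 3 [fib i, fib (i+2), fib (i+i)]) = (real (fib i) - 1)*(real (fib (i+2)) - 1) + 2*(real (fib i) * (2 * real (fib (i+2)) - 2 * real (fib (i-2))))"
    by simp
  moreover have "i + i = 2*i" by simp
  ultimately show ?thesis by (simp add: field_simps algebra_simps)
qed

lemma partC: assumes "i \<ge> 4"
  shows "real (sylvester_p 3 [fib i, fib (i+2), fib (2*i-1)])
        = ((real (fib i) + 4 * real (fib (i-1)) - 1) * real (fib (i+2)) - real (fib i) + 1) / 2 - 2 * real (fib (i-1)) * real (fib (i-3))"
proof -
  interpret S: setup3 "fib i" "fib (i+2)" "fib (i+(i-1))" "fib (i-1)" "fib (i-1-2)"
    using setup_fib[of i "i-1"] assms by simp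
  have A: "fib i = fib (i-1) + fib (i-2)" using fib_rec'[of i] assms by simp
  have h: "fib (i-1) = fib (i-1-1) + fib (i-1-2)" by (rule fib_rec') (use assms in simp)
  have e1: "i-1-1 = i-2" and e2: "i-1-2 = i-3" by simp_all
  have F: "fib (i-1) = fib (i-2) + fib (i-3)" using h unfolding e1 e2 .
  have Q: "fib (i-3) \<le> fib (i-2)" by (rule fib_mono) simp
  have e3: "i - 1 - 2 = i - 3" by simp
  have E: "2 * int (sylvester_p 3 [fib i, fib (i+2), fib (i+(i-1))]) = (int (fib i) - 1)*(int (fib (i+2)) - 1) + 2*(2 * int (fib (i-1)) * (int (fib (i+2)) - int (fib (i-3))))"
    using S.twice S.sum_c[OF A F[folded e3] Q[folded e3]] e3 by simp
  hence "real_of_int (2 * int (sylvester_p 3 [fib i, fib (i+2), fib (i+(i-1))])) = real_of_int ((int (fib i) - 1)*(int (fib (i+2)) - 1) + 2*(2 * int (fib (i-1)) * (int (fib (i+2)) - int (fib (i-3)))))"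
    by (rule arg_cong)
  hence "2 * real (sylvester_p 3 [fib i, fib (i+2), fib (i+(i-1))]) = (real (fib i) - 1)*(real (fib (i+2)) - 1) + 2*(2 * real (fib (i-1)) * (real (fib (i+2)) - real (fib (i-3))))"
    by simp
  moreover have "i + (i-1) = 2*i - 1" using assms by simp
  ultimately show ?thesis by (simp add: field_simps algebra_simps)
qed

lemma partD: assumes "i \<ge> 5"
  shows "real (sylvester_p 3 [fib i, fib (i+2), fib (2*i-2)])
        = ((3 * real (fib i) - 1) * real (fib (i+2)) - real (fib i) + 1) / 2 - (8 * real (fib i) - 15 * real (fib (i-2))) * real (fib (i-4))"
proof -
  interpret S: setup3 "fib i" "fib (i+2)" "fib (i+(i-2))" "fib (i-2)" "fib (i-2-2)"
    using setup_fib[of i "i-2"] assms by simp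
  have A0: "fib i = fib (i-1) + fib (i-2)" using fib_rec'[of i] assms by simp
  have h: "fib (i-1) = fib (i-1-1) + fib (i-1-2)" by (rule fib_rec') (use assms in simp)
  have e1: "i-1-1 = i-2" and e2: "i-1-2 = i-3" by simp_all
  have A1: "fib (i-1) = fib (i-2) + fib (i-3)" using h unfolding e1 e2 .
  have A: "fib i = 2 * fib (i-2) + fib (i-3)" using A0 A1 by simp
  have h2: "fib (i-2) = fib (i-2-1) + fib (i-2-2)" by (rule fib_rec') (use assms in simp)
  have e3: "i-2-1 = i-3" and e4': "i-2-2 = i-4" by simp_all
  have F: "fib (i-2) = fib (i-3) + fib (i-4)" using h2 unfolding e3 e4' .
  have Q: "fib (i-4) \<le> fib (i-3)" by (rule fib_mono) simp
  have e4: "i - 2 - 2 = i - 4" by simp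
  have E: "2 * int (sylvester_p 3 [fib i, fib (i+2), fib (i+(i-2))]) = (int (fib i) - 1)*(int (fib (i+2)) - 1) + 2*(int (fib i) * int (fib (i+2)) - int (fib (i-4)) * (9 * int (fib (i-3)) + int (fib (i-4))))"
    using S.twice S.sum_d[OF A F[folded e4] Q[folded e4]] e4 by simp
  hence "real_of_int (2 * int (sylvester_p 3 [fib i, fib (i+2), fib (i+(i-2))])) = real_of_int ((int (fib i) - 1)*(int (fib (i+2)) - 1) + 2*(int (fib i) * int (fib (i+2)) - int (fib (i-4)) * (9 * int (fib (i-3)) + int (fib (i-4)))))"
    by (rule arg_cong)
  hence R: "2 * real (sylvester_p 3 [fib i, fib (i+2), fib (i+(i-2))]) = (real (fib i) - 1)*(real (fib (i+2)) - 1) + 2*(real (fib i) * real (fib (i+2)) - real (fib (i-4)) * (9 * real (fib (i-3)) + real (fib (i-4))))"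
    by simp
  have Ar: "real (fib i) = 2 * real (fib (i-2)) + real (fib (i-3))" using A by simp
  have Fr: "real (fib (i-2)) = real (fib (i-3)) + real (fib (i-4))" using F by simp
  have ii: "i + (i-2) = 2*i - 2" using assms by simp
  show ?thesis using R unfolding ii Ar Fr by (simp add: field_simps algebra_simps)
qed

lemma partE: assumes "i \<ge> 3" "k \<ge> 3" "3 \<le> (fib i - 1) div fib k"
  shows "real (sylvester_p 3 [fib i, fib (i+2), fib (i+k)])
        = ((real (fib i) + 6 * real (fib k) - 1) * real (fib (i+2)) - real (fib i) + 1) / 2
          - (2 * real ((fib i - 1) div fib k) * real (fib i) - (real ((fib i - 1) div fib k) + 4) * (real ((fib i - 1) div fib k) - 3) * real (fib k)) * real (fib (k-2)) / 2"
proof -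
  interpret S: setup3 "fib i" "fib (i+2)" "fib (i+k)" "fib k" "fib (k-2)"
    using setup_fib assms by simp
  define \<rho> where "\<rho> = (fib i - 1) div fib k"
  have "3 * fib k \<le> fib i - 1"
  proof -
    have "3 * fib k \<le> (fib i - 1) div fib k * fib k" using assms(3) by simp
    also have "\<dots> \<le> fib i - 1" by (metis mult.commute times_div_less_eq_dividend)
    finally show ?thesis .
  qed
  moreover have "fib k > 0" using assms by (intro fib_neq_0_nat) simp
  ultimately have lt: "3 * fib k < fib i" by linarith
  have E: "2 * int (sylvester_p 3 [fib i, fib (i+2), fib (i+k)]) = (int (fib i) - 1)*(int (fib (i+2)) - 1) +
      (6 * int (fib k) * int (fib (i+2)) - int (fib (k-2)) * (int (fib k) * int \<rho> * (int \<rho> - 1)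
     + 2 * int \<rho> * (int (fib i) - int \<rho> * int (fib k)) + 12 * int (fib k)))"
    using S.twice S.sum_e[OF lt] unfolding \<rho>_def by simp
  hence "real_of_int (2 * int (sylvester_p 3 [fib i, fib (i+2), fib (i+k)])) = real_of_int ((int (fib i) - 1)*(int (fib (i+2)) - 1) +
      (6 * int (fib k) * int (fib (i+2)) - int (fib (k-2)) * (int (fib k) * int \<rho> * (int \<rho> - 1)
     + 2 * int \<rho> * (int (fib i) - int \<rho> * int (fib k)) + 12 * int (fib k))))"
    by (rule arg_cong)
  hence R: "2 * real (sylvester_p 3 [fib i, fib (i+2), fib (i+k)]) = (real (fib i) - 1)*(real (fib (i+2)) - 1) +
      (6 * real (fib k) * real (fib (i+2)) - real (fib (k-2)) * (real (fib k) * real \<rho> * (real \<rho> - 1)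
     + 2 * real \<rho> * (real (fib i) - real \<rho> * real (fib k)) + 12 * real (fib k)))"
    by simp
  show ?thesis using R unfolding \<rho>_def[symmetric] by (simp add: field_simps algebra_simps)
qed

theorem theorem12:
  fixes i k :: nat
  assumes "i \<ge> 3" and "k \<ge> 3"
  defines "F \<equiv> (\<lambda>m. real (fib m))"
  shows
   "(k \<ge> i + 3 \<longrightarrow>
      real (sylvester_p 3 [fib i, fib (i+2), fib (i+k)])
        = (7 * F i * F (i+2) - F i - F (i+2) + 1) / 2)
  \<and> real (sylvester_p 3 [fib i, fib (i+2), fib (2*i)])
        = ((5 * F i - 1) * F (i+2) - F i + 1) / 2 - 2 * F i * F (i-2)
  \<and> (i \<ge> 4 \<longrightarrow>
      real (sylvester_p 3 [fib i, fib (i+2), fib (2*i-1)])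
        = ((F i + 4 * F (i-1) - 1) * F (i+2) - F i + 1) / 2 - 2 * F (i-1) * F (i-3))
  \<and> (i \<ge> 5 \<longrightarrow>
      real (sylvester_p 3 [fib i, fib (i+2), fib (2*i-2)])
        = ((3 * F i - 1) * F (i+2) - F i + 1) / 2 - (8 * F i - 15 * F (i-2)) * F (i-4))
  \<and> (let r = (fib i - 1) div fib k in r \<ge> 3 \<longrightarrow>
      real (sylvester_p 3 [fib i, fib (i+2), fib (i+k)])
        = ((F i + 6 * F k - 1) * F (i+2) - F i + 1) / 2
          - (2 * real r * F i - (real r + 4) * (real r - 3) * F k) * F (k-2) / 2)"
proof -
  have A: "k \<ge> i + 3 \<longrightarrow> real (sylvester_p 3 [fib i, fib (i+2), fib (i+k)])
        = (7 * F i * F (i+2) - F i - F (i+2) + 1) / 2"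
    unfolding F_def using partA assms(1) by simp
  have B: "real (sylvester_p 3 [fib i, fib (i+2), fib (2*i)])
        = ((5 * F i - 1) * F (i+2) - F i + 1) / 2 - 2 * F i * F (i-2)"
    unfolding F_def using partB assms(1) by simp
  have C: "i \<ge> 4 \<longrightarrow>
      real (sylvester_p 3 [fib i, fib (i+2), fib (2*i-1)])
        = ((F i + 4 * F (i-1) - 1) * F (i+2) - F i + 1) / 2 - 2 * F (i-1) * F (i-3)"
    unfolding F_def using partC by simp
  have D: "i \<ge> 5 \<longrightarrow>
      real (sylvester_p 3 [fib i, fib (i+2), fib (2*i-2)])
        = ((3 * F i - 1) * F (i+2) - F i + 1) / 2 - (8 * F i - 15 * F (i-2)) * F (i-4)"
    unfolding F_def using partD by simp
  have E: "let r = (fib i - 1) div fib k in r \<ge> 3 \<longrightarrow>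
      real (sylvester_p 3 [fib i, fib (i+2), fib (i+k)])
        = ((F i + 6 * F k - 1) * F (i+2) - F i + 1) / 2
          - (2 * real r * F i - (real r + 4) * (real r - 3) * F k) * F (k-2) / 2"
    unfolding F_def Let_def using partE assms by simp
  show ?thesis using A B C D E by blast
qed

end
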